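(* Let $c>0$, $\alpha>0$, $\lambda>1$, $\varepsilon=\lambda-1$, and let $r\le1$ be a $\lambda$-radius function which is $(c,\alpha)$-Diophantine; put $r'=\lambda r$. Let $V'\subset V\subset\mathbb C$ be open with $\delta(V',V)\ge\varepsilon$, and let $f=(f_n)$ be holomorphic sequences on $V(r)$ with $\sup_{V(r)_n}|f_n|\le A\rho^n$ for all $n$, where $A>0$ and $0<\rho<1$. Then $S(f)$ is Whitney $C^\infty$ on $\mathcal R(V'(r'))$, in the sense that for every $m\ge1$ there is $K_m$ with $|S(f)(z)-\sum_{k<m}\frac{1}{k!}S(f^{(k)})(z_0)(z-z_0)^k|\le K_m|z-z_0|^m$ for all $z,z_0\in\mathcal R(V'(r'))$, and for every $z_0\in\mathcal R(V'(r'))$ and every $m\ge0$, $$|S(f^{(m)})(z_0)|\le \frac{A\,m!}{c^m\varepsilon^m}\sum_{n\ge1}n^{\alpha m}\rho^n .$$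
   Context: Stacked space $\mathbb X=\mathbb N\times\mathbb P$ ($\mathbb N=\{1,2,\dots\}$), discrete pole set $\mathcal P\subset\mathbb X$, $P_n$ the poles on sheet $n$. Radius function $r:\mathcal P\to\mathbb R_{>0}$: constant on each sheet (value $r_n$), closed discs of radius $r$ around distinct poles of a sheet disjoint; $\lambda$-radius function: $\lambda r$ is a radius function. $r$ is $(c,\alpha)$-Diophantine if $r_n\ge c/n^\alpha$ for all $n$. $W(\rho)_n=\{z\in W:|z-a|\ge\rho_n\ \forall a\in P_n\}$, residual set $\mathcal R(W(\rho))=\bigcap_nW(\rho)_n$; $f_n$ holomorphic on a neighbourhood of $V(r)_n$; $S(g)(z)=\sum_ng_n(z)$. Huygens distance $\delta(U,V)=\sup\{\rho:\ D(z,\rho)\subset V\ \forall z\in U\}$. *)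

theory Defs
  imports "HOL-Analysis.Analysis"
begin

text \<open>Stacked space: sheets indexed by n \<ge> 1; the poles on sheet n are P n.
  A (sheetwise constant) radius function is given by its sheet values r n.\<close>

definition is_radius_function :: "(nat \<Rightarrow> complex set) \<Rightarrow> (nat \<Rightarrow> real) \<Rightarrow> bool" where
  "is_radius_function P r \<longleftrightarrow>
     (\<forall>n\<ge>1. r n > 0) \<and>
     (\<forall>n\<ge>1. \<forall>a\<in>P n. \<forall>b\<in>P n. a \<noteq> b \<longrightarrow> cball a (r n) \<inter> cball b (r n) = {})"

definition is_lambda_radius_function ::
  "real \<Rightarrow> (nat \<Rightarrow> complex set) \<Rightarrow> (nat \<Rightarrow> real) \<Rightarrow> bool" where
  "is_lambda_radius_function l P r \<longleftrightarrow> is_radius_function P (\<lambda>n. l * r n)"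

definition diophantine :: "real \<Rightarrow> real \<Rightarrow> (nat \<Rightarrow> real) \<Rightarrow> bool" where
  "diophantine c \<alpha> r \<longleftrightarrow> (\<forall>n\<ge>1. r n \<ge> c / real n powr \<alpha>)"

definition sheet_set :: "(nat \<Rightarrow> complex set) \<Rightarrow> complex set \<Rightarrow> (nat \<Rightarrow> real) \<Rightarrow> nat \<Rightarrow> complex set" where
  "sheet_set P W \<rho> n = {z \<in> W. \<forall>a\<in>P n. dist z a \<ge> \<rho> n}"

definition residual_set :: "(nat \<Rightarrow> complex set) \<Rightarrow> complex set \<Rightarrow> (nat \<Rightarrow> real) \<Rightarrow> complex set" where
  "residual_set P W \<rho> = (\<Inter>n\<in>{1..}. sheet_set P W \<rho> n)"

definition S :: "(nat \<Rightarrow> complex \<Rightarrow> complex) \<Rightarrow> complex \<Rightarrow> complex" where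
  "S g z = (\<Sum>n. g (Suc n) z)"

definition dseq :: "nat \<Rightarrow> (nat \<Rightarrow> complex \<Rightarrow> complex) \<Rightarrow> nat \<Rightarrow> complex \<Rightarrow> complex" where
  "dseq k g n = (deriv ^^ k) (g n)"

text \<open>Huygens distance (valued in extended reals so that it is well defined
  also when the defining set is unbounded); D(z,rho) is the open disc.\<close>
definition huygens_dist :: "complex set \<Rightarrow> complex set \<Rightarrow> ereal" where
  "huygens_dist U V = Sup {ereal \<rho> | \<rho>. \<forall>z\<in>U. ball z \<rho> \<subseteq> V}"

end

theory Submission
  imports Defs "HOL-Real_Asymp.Real_Asymp" "HOL-Complex_Analysis.Complex_Analysis"
begin

lemma summable_powr_geom:
  assumes "0 < \<rho>" "\<rho> < (1::real)"
  shows "summable (\<lambda>n. real (Suc n) powr a * \<rho> ^ Suc n)"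
proof -
  define \<sigma> where "\<sigma> = (1+\<rho>)/2"
  have sp: "\<sigma> > 0" "\<sigma> < 1" using assms by (auto simp: \<sigma>_def)
  have lim: "(\<lambda>n. real (Suc n) powr a * \<rho> ^ n / ((1+\<rho>)/2) ^ n) \<longlonglongrightarrow> 0"
    using assms by real_asymp
  then have ev: "eventually (\<lambda>n. real (Suc n) powr a * \<rho> ^ n / \<sigma> ^ n < 1) sequentially"
    unfolding \<sigma>_def using order_tendstoD(2) zero_less_one by blast
  have "summable (\<lambda>n. real (Suc n) powr a * \<rho> ^ n)"
  proof (rule summable_comparison_test_ev[OF _ summable_geometric[of \<sigma>]])
    show "eventually (\<lambda>n. norm (real (Suc n) powr a * \<rho> ^ n) \<le> \<sigma> ^ n) sequentially"
      using ev
    proof (rule eventually_mono)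
      fix n assume "real (Suc n) powr a * \<rho> ^ n / \<sigma> ^ n < 1"
      then have "real (Suc n) powr a * \<rho> ^ n < \<sigma> ^ n" using sp
        by (simp add: divide_less_eq)
      then show "norm (real (Suc n) powr a * \<rho> ^ n) \<le> \<sigma> ^ n" using assms by simp
    qed
  qed (use sp in simp)
  then have "summable (\<lambda>n. \<rho> * (real (Suc n) powr a * \<rho> ^ n))" by (rule summable_mult)
  then show ?thesis by (simp add: algebra_simps)
qed

lemma cauchy_ball:
  fixes f :: "complex \<Rightarrow> complex"
  assumes hol: "f holomorphic_on ball z R" and R: "0 < R"
    and bd: "\<And>w. w \<in> ball z R \<Longrightarrow> norm (f w) \<le> M"
  shows "norm ((deriv ^^ k) f z) \<le> fact k * M / R ^ k"
proof -
  have *: "norm ((deriv ^^ k) f z) * s ^ k \<le> fact k * M" if s: "0 < s" "s < R" for s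
  proof -
    have "norm ((deriv ^^ k) f z) \<le> fact k * M / s ^ k"
    proof (rule Cauchy_inequality)
      show "f holomorphic_on ball z s"
        by (rule holomorphic_on_subset[OF hol]) (use s in auto)
      show "continuous_on (cball z s) f"
        by (rule continuous_on_subset[OF holomorphic_on_imp_continuous_on[OF hol]]) (use s in auto)
      show "0 < s" by fact
      show "norm (f x) \<le> M" if "norm (z - x) = s" for x
        using bd[of x] that s by (simp add: dist_norm)
    qed
    then show ?thesis using s by (simp add: divide_simps)
  qed
  have "norm ((deriv ^^ k) f z) * R ^ k \<le> fact k * M"
  proof (rule tendsto_le[OF trivial_limit_at_left_real])
    show "((\<lambda>s. norm ((deriv ^^ k) f z) * s ^ k) \<longlongrightarrow> norm ((deriv ^^ k) f z) * R ^ k) (at_left R)"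
      by (intro tendsto_intros)
    show "((\<lambda>s. fact k * M) \<longlongrightarrow> fact k * M) (at_left R)" by simp
    show "eventually (\<lambda>s. norm ((deriv ^^ k) f z) * s ^ k \<le> fact k * M) (at_left R)"
      using eventually_at_left_real[OF R] by (rule eventually_mono) (use * in auto)
  qed
  then show ?thesis using R by (simp add: divide_simps)
qed

lemma taylor_whitney:
  fixes g :: "complex \<Rightarrow> complex"
  assumes hol: "g holomorphic_on ball z0 R" and R: "0 < R"
    and bd: "\<And>w. w \<in> ball z0 R \<Longrightarrow> norm (g w) \<le> M"
    and bz: "norm (g z) \<le> M"
  shows "norm (g z - (\<Sum>k<m. (deriv ^^ k) g z0 / fact k * (z - z0) ^ k))
           \<le> (real m + 2) * 2 ^ m * M * (norm (z - z0) / R) ^ m"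
proof -
  define t where "t = norm (z - z0) / R"
  define a where "a k = (deriv ^^ k) g z0 / fact k * (z - z0) ^ k" for k
  have t0: "t \<ge> 0" using R by (simp add: t_def)
  have M0: "M \<ge> 0" using bd[of z0] R by (meson centre_in_ball norm_ge_zero order_trans)
  have na: "norm (a k) \<le> M * t ^ k" for k
  proof -
    have c: "norm ((deriv ^^ k) g z0) \<le> fact k * M / R ^ k"
      by (rule cauchy_ball[OF hol R bd])
    have "norm (a k) = norm ((deriv ^^ k) g z0) / fact k * norm (z - z0) ^ k"
      by (simp add: a_def norm_mult norm_divide norm_power)
    also have "\<dots> \<le> (fact k * M / R ^ k) / fact k * norm (z - z0) ^ k"
      by (intro mult_right_mono divide_right_mono c) auto
    also have "\<dots> = M * t ^ k" by (simp add: t_def power_divide)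
    finally show ?thesis .
  qed
  have goal: "norm (g z - (\<Sum>k<m. a k)) \<le> (real m + 2) * 2 ^ m * M * t ^ m"
  proof (cases "t < 1/2")
    case True
    have "z \<in> ball z0 R" using True R by (simp add: t_def dist_norm norm_minus_commute divide_less_eq)
    from holomorphic_power_series[OF hol this] have s: "a sums g z"
      unfolding a_def by simp
    then have sa: "summable a" by (rule sums_summable)
    have "g z - (\<Sum>k<m. a k) = (\<Sum>j. a (j + m))"
      using suminf_split_initial_segment[OF sa, of m] sums_unique[OF s] by simp
    moreover have "norm (\<Sum>j. a (j + m)) \<le> (\<Sum>j. M * t ^ m * t ^ j)"
    proof (rule norm_suminf_le)
      show "norm (a (j + m)) \<le> M * t ^ m * t ^ j" for j
        using na[of "j+m"] by (simp add: power_add algebra_simps)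
      show "summable (\<lambda>j. M * t ^ m * t ^ j)"
        using True t0 by (intro summable_mult summable_geometric) simp
    qed
    moreover have "(\<Sum>j. M * t ^ m * t ^ j) = M * t ^ m * (1 / (1 - t))"
      using True t0 by (subst suminf_mult) (auto simp: suminf_geometric)
    moreover have "M * t ^ m * (1 / (1 - t)) \<le> (real m + 2) * 2 ^ m * M * t ^ m"
    proof -
      have "1 / (1 - t) \<le> 2" using True t0 by (simp add: divide_simps)
      also have "(2::real) \<le> (real m + 2) * 2 ^ m"
      proof -
        have "(1::real) \<le> 2 ^ m" by simp
        then have "(2::real) \<le> 2 * 2 ^ m" by simp
        also have "\<dots> \<le> (real m + 2) * 2 ^ m" by (intro mult_right_mono) auto
        finally show ?thesis .
      qed
      finally have "1 / (1 - t) \<le> (real m + 2) * 2 ^ m" .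
      then have "M * t ^ m * (1 / (1 - t)) \<le> M * t ^ m * ((real m + 2) * 2 ^ m)"
        using M0 t0 by (intro mult_left_mono) auto
      then show ?thesis by (simp add: algebra_simps)
    qed
    ultimately show ?thesis by simp
  next
    case False
    have pk: "t ^ k \<le> 2 ^ m * t ^ m" if "k \<le> m" for k
    proof -
      have "t ^ k \<le> (2 * t) ^ k" using t0 by (intro power_mono) auto
      also have "\<dots> \<le> (2 * t) ^ m" using False that by (intro power_increasing) auto
      finally show ?thesis by (simp add: power_mult_distrib)
    qed
    have "norm (g z - (\<Sum>k<m. a k)) \<le> norm (g z) + norm (\<Sum>k<m. a k)"
      by (rule norm_triangle_ineq4)
    also have "\<dots> \<le> M + (\<Sum>k<m. M * t ^ k)"
      by (intro add_mono bz order_trans[OF norm_sum] sum_mono na)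
    also have "\<dots> \<le> M * (2 ^ m * t ^ m) + (\<Sum>k<m. M * (2 ^ m * t ^ m))"
    proof (intro add_mono sum_mono)
      show "M \<le> M * (2 ^ m * t ^ m)" using pk[of 0] M0 mult_left_mono[of 1 "2 ^ m * t ^ m" M] by simp
      show "M * t ^ k \<le> M * (2 ^ m * t ^ m)" if "k \<in> {..<m}" for k
        using pk[of k] that M0 by (intro mult_left_mono) auto
    qed
    also have "\<dots> = (real m + 1) * 2 ^ m * M * t ^ m" by (simp add: algebra_simps)
    also have "\<dots> \<le> (real m + 2) * 2 ^ m * M * t ^ m"
      using M0 t0 by (intro mult_right_mono) auto
    finally show ?thesis .
  qed
  then show ?thesis by (simp add: a_def t_def)
qed

theorem corollaryC:
  fixes c \<alpha> l \<epsilon> A \<rho> :: real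
    and P :: "nat \<Rightarrow> complex set"
    and r :: "nat \<Rightarrow> real"
    and V V' :: "complex set"
    and f :: "nat \<Rightarrow> complex \<Rightarrow> complex"
  assumes "c > 0" "\<alpha> > 0" "l > 1" "\<epsilon> = l - 1"
    and "is_radius_function P r"
    and "is_lambda_radius_function l P r"
    and "\<forall>n\<ge>1. r n \<le> 1"
    and "diophantine c \<alpha> r"
    and "open V" "open V'" "V' \<subseteq> V"
    and "huygens_dist V' V \<ge> ereal \<epsilon>"
    and "\<forall>n\<ge>1. \<exists>U. open U \<and> sheet_set P V r n \<subseteq> U \<and> f n holomorphic_on U"
    and "A > 0" "0 < \<rho>" "\<rho> < 1"
    and "\<forall>n\<ge>1. \<forall>z\<in>sheet_set P V r n. norm (f n z) \<le> A * \<rho> ^ n"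
  shows "(\<forall>z\<in>residual_set P V' (\<lambda>n. l * r n). \<forall>k.
            summable (\<lambda>n. dseq k f (Suc n) z))
       \<and> (\<forall>m\<ge>1. \<exists>K. \<forall>z\<in>residual_set P V' (\<lambda>n. l * r n).
            \<forall>z0\<in>residual_set P V' (\<lambda>n. l * r n).
              norm (S f z - (\<Sum>k<m. S (dseq k f) z0 / of_nat (fact k) * (z - z0) ^ k))
                \<le> K * norm (z - z0) ^ m)
       \<and> (\<forall>z0\<in>residual_set P V' (\<lambda>n. l * r n). \<forall>m.
            norm (S (dseq m f) z0)
              \<le> A * fact m / (c ^ m * \<epsilon> ^ m)
                 * (\<Sum>n. real (Suc n) powr (\<alpha> * real m) * \<rho> ^ Suc n))"
proof -
  define RS where "RS = residual_set P V' (\<lambda>n. l * r n)"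
  have c0: "c > 0" and e0: "\<epsilon> > 0" and A0: "A > 0" and rho0: "\<rho> > 0" and rho1: "\<rho> < 1"
    using assms by auto
  have rpos: "r n > 0" if "n \<ge> 1" for n
    using assms(5) that by (auto simp: is_radius_function_def)
  have rle: "r n \<le> 1" if "n \<ge> 1" for n using assms(7) that by auto
  have rdio: "r n \<ge> c / real n powr \<alpha>" if "n \<ge> 1" for n
    using assms(8) that by (auto simp: diophantine_def)
  have RS1: "z \<in> V'" if "z \<in> RS" for z
    using that by (auto simp: RS_def residual_set_def sheet_set_def)
  have RS2: "dist z a \<ge> l * r n" if "z \<in> RS" "n \<ge> 1" "a \<in> P n" for z n a
    using that by (auto simp: RS_def residual_set_def sheet_set_def)
  have huy: "ball z \<epsilon> \<subseteq> V" if "z \<in> V'" for z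
  proof
    fix w assume w: "w \<in> ball z \<epsilon>"
    have "ereal (dist z w) < huygens_dist V' V"
    proof -
      have "ereal (dist z w) < ereal \<epsilon>" using w by simp
      then show ?thesis using assms(12) by (rule order_less_le_trans)
    qed
    then obtain x where "x \<in> {ereal \<rho> | \<rho>. \<forall>z\<in>V'. ball z \<rho> \<subseteq> V}" "ereal (dist z w) < x"
      unfolding huygens_dist_def using less_Sup_iff by blast
    then obtain \<rho>' where "\<forall>z\<in>V'. ball z \<rho>' \<subseteq> V" "dist z w < \<rho>'" by auto
    then show "w \<in> V" using that by (meson mem_ball subsetD)
  qed
  have ballsheet: "ball z0 (\<epsilon> * r n) \<subseteq> sheet_set P V r n" if "z0 \<in> RS" "n \<ge> 1" for z0 n
  proof
    fix w assume w: "w \<in> ball z0 (\<epsilon> * r n)"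
    have "\<epsilon> * r n \<le> \<epsilon>" using rle[OF that(2)] e0 by (simp add: mult_left_le)
    then have "w \<in> V" using huy[OF RS1[OF that(1)]] w by auto
    moreover have "dist w a \<ge> r n" if "a \<in> P n" for a
    proof -
      have "dist z0 a \<le> dist z0 w + dist w a" by (rule dist_triangle)
      moreover have "dist z0 a \<ge> l * r n" using RS2 \<open>z0 \<in> RS\<close> \<open>n \<ge> 1\<close> that by blast
      ultimately show ?thesis using w assms(4) by (simp add: algebra_simps)
    qed
    ultimately show "w \<in> sheet_set P V r n" by (simp add: sheet_set_def)
  qed
  have insheet: "z \<in> sheet_set P V r n" if "z \<in> RS" "n \<ge> 1" for z n
  proof -
    have "l * r n \<ge> r n" using assms(3) rpos[OF that(2)] by simp
    then show ?thesis using RS1[OF that(1)] RS2[OF that(1) that(2)] assms(11)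
      by (force simp: sheet_set_def)
  qed
  have holb: "f n holomorphic_on ball z0 (\<epsilon> * r n)" if hz: "z0 \<in> RS" "n \<ge> 1" for z0 n
  proof -
    obtain U where "sheet_set P V r n \<subseteq> U" "f n holomorphic_on U" using assms(13) hz(2) by blast
    then show ?thesis using ballsheet[OF hz] holomorphic_on_subset by blast
  qed
  have bdb: "norm (f n w) \<le> A * \<rho> ^ n" if "z0 \<in> RS" "n \<ge> 1" "w \<in> ball z0 (\<epsilon> * r n)" for z0 n w
    using assms(17) ballsheet[OF that(1,2)] that(2,3) by blast
  have Rpos: "\<epsilon> * r n > 0" if "n \<ge> 1" for n using e0 rpos[OF that] by simp
  have inv: "1 / (\<epsilon> * r n) ^ k \<le> real n powr (\<alpha> * real k) / (c ^ k * \<epsilon> ^ k)" if "n \<ge> 1" for n k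
  proof -
    have np: "real n powr \<alpha> > 0" using that by simp
    have "\<epsilon> * (c / real n powr \<alpha>) \<le> \<epsilon> * r n" using rdio[OF that] e0 by (intro mult_left_mono) auto
    then have "(\<epsilon> * (c / real n powr \<alpha>)) ^ k \<le> (\<epsilon> * r n) ^ k"
      using e0 c0 np by (intro power_mono) auto
    then have "1 / (\<epsilon> * r n) ^ k \<le> 1 / (\<epsilon> * (c / real n powr \<alpha>)) ^ k"
      using e0 c0 np rpos[OF that] by (intro divide_left_mono mult_pos_pos zero_less_power) auto
    also have "\<dots> = (real n powr \<alpha>) ^ k / (c ^ k * \<epsilon> ^ k)"
      using np by (simp add: power_divide power_mult_distrib field_simps)
    also have "(real n powr \<alpha>) ^ k = real n powr (\<alpha> * real k)"
      using np by (simp add: powr_realpow[symmetric] powr_powr)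
    finally show ?thesis .
  qed
  have dbound: "norm (dseq k f n z0) \<le> A * fact k / (c ^ k * \<epsilon> ^ k) * (real n powr (\<alpha> * real k) * \<rho> ^ n)"
    if "z0 \<in> RS" "n \<ge> 1" for z0 n k
  proof -
    have "norm (dseq k f n z0) \<le> fact k * (A * \<rho> ^ n) / (\<epsilon> * r n) ^ k"
      unfolding dseq_def by (rule cauchy_ball[OF holb[OF that] Rpos[OF that(2)] bdb[OF that]])
    also have "\<dots> = fact k * (A * \<rho> ^ n) * (1 / (\<epsilon> * r n) ^ k)" by simp
    also have "\<dots> \<le> fact k * (A * \<rho> ^ n) * (real n powr (\<alpha> * real k) / (c ^ k * \<epsilon> ^ k))"
      using inv[OF that(2)] A0 rho0 by (intro mult_left_mono) auto
    also have "\<dots> = A * fact k / (c ^ k * \<epsilon> ^ k) * (real n powr (\<alpha> * real k) * \<rho> ^ n)"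
      by simp
    finally show ?thesis .
  qed
  define G where "G k n = A * fact k / (c ^ k * \<epsilon> ^ k) * (real (Suc n) powr (\<alpha> * real k) * \<rho> ^ Suc n)" for k n
  have Gs: "summable (G k)" for k
    unfolding G_def by (intro summable_mult summable_powr_geom rho0 rho1)
  have dG: "norm (dseq k f (Suc n) z0) \<le> G k n" if "z0 \<in> RS" for z0 n k
    unfolding G_def using dbound[OF that, of "Suc n" k] by simp
  have P1: "summable (\<lambda>n. dseq k f (Suc n) z)" if "z \<in> RS" for z k
    by (rule summable_norm_cancel, rule summable_comparison_test[OF _ Gs[of k]]) (use dG[OF that] in auto)
  have P3: "norm (S (dseq m f) z0) \<le> A * fact m / (c ^ m * \<epsilon> ^ m)
                 * (\<Sum>n. real (Suc n) powr (\<alpha> * real m) * \<rho> ^ Suc n)" if "z0 \<in> RS" for z0 m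
  proof -
    have "norm (S (dseq m f) z0) \<le> suminf (G m)"
      unfolding S_def by (rule norm_suminf_le[OF dG[OF that] Gs])
    also have "suminf (G m) = A * fact m / (c ^ m * \<epsilon> ^ m)
                 * (\<Sum>n. real (Suc n) powr (\<alpha> * real m) * \<rho> ^ Suc n)"
      unfolding G_def by (rule suminf_mult[OF summable_powr_geom[OF rho0 rho1]])
    finally show ?thesis .
  qed
  have P2: "\<exists>K. \<forall>z\<in>RS. \<forall>z0\<in>RS.
              norm (S f z - (\<Sum>k<m. S (dseq k f) z0 / of_nat (fact k) * (z - z0) ^ k))
                \<le> K * norm (z - z0) ^ m" for m
  proof -
    define C where "C = (real m + 2) * 2 ^ m * A / (c ^ m * \<epsilon> ^ m)"
    define T where "T = (\<Sum>n. real (Suc n) powr (\<alpha> * real m) * \<rho> ^ Suc n)"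
    have Ts: "summable (\<lambda>n. real (Suc n) powr (\<alpha> * real m) * \<rho> ^ Suc n)"
      by (rule summable_powr_geom[OF rho0 rho1])
    show ?thesis
    proof (intro exI ballI)
      fix z z0 assume z: "z \<in> RS" and z0: "z0 \<in> RS"
      define tm where "tm n = f (Suc n) z - (\<Sum>k<m. dseq k f (Suc n) z0 / of_nat (fact k) * (z - z0) ^ k)" for n
      define B where "B n = C * (real (Suc n) powr (\<alpha> * real m) * \<rho> ^ Suc n) * norm (z - z0) ^ m" for n
      have sf: "summable (\<lambda>n. f (Suc n) z)" using P1[OF z, of 0] by (simp add: dseq_def)
      have eq: "S f z - (\<Sum>k<m. S (dseq k f) z0 / of_nat (fact k) * (z - z0) ^ k) = suminf tm"
      proof -
        have "(\<Sum>k<m. S (dseq k f) z0 / of_nat (fact k) * (z - z0) ^ k)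
            = (\<Sum>k<m. \<Sum>n. dseq k f (Suc n) z0 / of_nat (fact k) * (z - z0) ^ k)"
          unfolding S_def
        proof (intro sum.cong refl)
          fix k
          have s: "summable (\<lambda>n. dseq k f (Suc n) z0)" by (rule P1[OF z0])
          show "(\<Sum>n. dseq k f (Suc n) z0) / of_nat (fact k) * (z - z0) ^ k =
                (\<Sum>n. dseq k f (Suc n) z0 / of_nat (fact k) * (z - z0) ^ k)"
            using suminf_divide[OF s, of "of_nat (fact k)"]
                  suminf_mult2[OF summable_divide[OF s, of "of_nat (fact k)"], of "(z - z0) ^ k"]
            by simp
        qed
        also have "\<dots> = (\<Sum>n. \<Sum>k<m. dseq k f (Suc n) z0 / of_nat (fact k) * (z - z0) ^ k)"
          by (rule suminf_sum[symmetric]) (intro summable_mult2 summable_divide P1[OF z0])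
        finally show ?thesis unfolding S_def tm_def
          by (simp add: suminf_diff[OF sf summable_sum] summable_mult2 summable_divide P1[OF z0])
      qed
      have tb: "norm (tm n) \<le> B n" for n
      proof -
        have n1: "Suc n \<ge> 1" by simp
        have fz: "norm (f (Suc n) z) \<le> A * \<rho> ^ Suc n"
          using assms(17)[rule_format, OF n1 insheet[OF z n1]] .
        have "norm (tm n) \<le> (real m + 2) * 2 ^ m * (A * \<rho> ^ Suc n) * (norm (z - z0) / (\<epsilon> * r (Suc n))) ^ m"
          unfolding tm_def dseq_def
          using taylor_whitney[OF holb[OF z0 n1] Rpos[OF n1] bdb[OF z0 n1] fz, of m]
          by (simp add: algebra_simps)
        also have "\<dots> = (real m + 2) * 2 ^ m * (A * \<rho> ^ Suc n) * norm (z - z0) ^ m * (1 / (\<epsilon> * r (Suc n)) ^ m)"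
          by (simp add: power_divide)
        also have "\<dots> \<le> (real m + 2) * 2 ^ m * (A * \<rho> ^ Suc n) * norm (z - z0) ^ m * (real (Suc n) powr (\<alpha> * real m) / (c ^ m * \<epsilon> ^ m))"
          using inv[OF n1, of m] A0 rho0 by (intro mult_left_mono) auto
        also have "\<dots> = B n" by (simp add: B_def C_def)
        finally show ?thesis .
      qed
      have Bs: "summable B" unfolding B_def by (intro summable_mult2 summable_mult Ts)
      have "norm (suminf tm) \<le> suminf B" by (rule norm_suminf_le[OF tb Bs])
      also have "suminf B = C * T * norm (z - z0) ^ m"
        unfolding B_def T_def
        using suminf_mult2[OF summable_mult[OF Ts, of C], of "norm (z - z0) ^ m"] suminf_mult[OF Ts, of C]
        by simp
      finally show "norm (S f z - (\<Sum>k<m. S (dseq k f) z0 / of_nat (fact k) * (z - z0) ^ k))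
                \<le> C * T * norm (z - z0) ^ m" using eq by simp
    qed
  qed
  show ?thesis using P1 P2 P3 unfolding RS_def by blast
qed

end
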